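(* Let $n,k,t$ be positive integers with $t\leq\frac{\log n}{2k}$, let $p\geq\frac{\log^3 n}{n}$, and fix $u\in\{1,\dots,n\}$. Let $\mathcal W$ be the set of walks $w=(w(0),w(1),\dots,w(k))$ of length $k$ in the complete graph (with self-loops) on $\{1,\dots,n\}$ with $w(0)=u$. For $\vec w=(w_1,\dots,w_{2t})\in\mathcal W^{2t}$, call $\vec w$ valid if every edge (unordered pair $\{a,b\}$, possibly $a=b$) traversed by the walks is traversed at least twice in total, counting multiplicity over all steps of all $2t$ walks, and let $|\vec w|$ be the number of distinct edges traversed. Let $\mathcal W^{2t}_{pair}$ be the set of valid $\vec w$. Then for every $\ell$, $$\big|\{\vec w\in\mathcal W^{2t}_{pair}:\ |\vec w|=\ell\}\big|\leq\binom{2tk}{2\ell}(2\ell-1)!!\cdot\ell^{2kt-2\ell}\,n^\ell.$$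
   Context: $(2\ell-1)!!=(2\ell-1)(2\ell-3)\cdots 1$. *)

theory Defs
  imports Complex_Main
begin

definition odd_dfact :: "nat \<Rightarrow> nat" where
  "odd_dfact l = (\<Prod>i\<in>{1..l}. 2 * i - 1)"

definition walks :: "nat \<Rightarrow> nat \<Rightarrow> nat \<Rightarrow> nat list set" where
  "walks n k u = {w. length w = k + 1 \<and> w ! 0 = u \<and> set w \<subseteq> {1..n}}"

definition step_edge :: "nat list \<Rightarrow> nat \<Rightarrow> nat set" where
  "step_edge w j = {w ! j, w ! Suc j}"

definition tuple_edges :: "nat \<Rightarrow> nat list list \<Rightarrow> nat set set" where
  "tuple_edges k ws = {step_edge (ws ! i) j | i j. i < length ws \<and> j < k}"

definition edge_mult :: "nat \<Rightarrow> nat list list \<Rightarrow> nat set \<Rightarrow> nat" where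
  "edge_mult k ws e = card {(i, j). i < length ws \<and> j < k \<and> step_edge (ws ! i) j = e}"

definition paired_tuples :: "nat \<Rightarrow> nat \<Rightarrow> nat \<Rightarrow> nat \<Rightarrow> nat list list set" where
  "paired_tuples n k t u = {ws. length ws = 2 * t \<and> (\<forall>w\<in>set ws. w \<in> walks n k u)
      \<and> (\<forall>e\<in>tuple_edges k ws. edge_mult k ws e \<ge> 2)}"

end

theory Submission
  imports Defs
begin

definition keys :: "('a list \<Rightarrow> 'a \<Rightarrow> 'k) \<Rightarrow> 'a list \<Rightarrow> 'k list" where
  "keys \<kappa> xs = map (\<lambda>s. \<kappa> (take s xs) (xs ! s)) [0..<length xs]"

lemma keys_snoc: "keys \<kappa> (xs @ [x]) = keys \<kappa> xs @ [\<kappa> xs x]"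
  unfolding keys_def by (auto simp: nth_append)

definition cnt :: "'k list \<Rightarrow> 'k \<Rightarrow> nat" where
  "cnt kl e = length (filter ((=) e) kl)"

definition once :: "'k list \<Rightarrow> 'k set" where
  "once kl = {e \<in> set kl. cnt kl e = 1}"
definition twice :: "'k list \<Rightarrow> 'k set" where
  "twice kl = {e \<in> set kl. cnt kl e \<ge> 2}"

definition good :: "nat \<Rightarrow> 'k list \<Rightarrow> bool" where
  "good l kl \<longleftrightarrow> card (set kl) = l \<and> (\<forall>e\<in>set kl. cnt kl e \<ge> 2)"

lemma cnt_pos: "e \<in> set kl \<Longrightarrow> cnt kl e \<ge> 1"
  unfolding cnt_def by (metis One_nat_def Suc_leI filter_empty_conv length_greater_0_conv)

lemma cnt_snoc: "cnt (kl @ [e']) e = cnt kl e + (if e = e' then 1 else 0)"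
  unfolding cnt_def by auto

lemma set_split: "set kl = once kl \<union> twice kl" "once kl \<inter> twice kl = {}"
  unfolding once_def twice_def using cnt_pos by fastforce+

lemma card_set_split: "card (set kl) = card (once kl) + card (twice kl)"
  by (metis card_Un_disjoint finite_Un finite_set set_split)

lemma good_iff: "good l kl \<longleftrightarrow> card (once kl) = 0 \<and> card (twice kl) = l"
proof -
  have f: "finite (once kl)" using set_split(1)[of kl]
    by (metis finite_Un finite_set)
  have "(\<forall>e\<in>set kl. cnt kl e \<ge> 2) \<longleftrightarrow> once kl = {}"
    unfolding once_def using cnt_pos by fastforce
  then show ?thesis unfolding good_def using card_set_split[of kl] f by auto
qed

lemma snoc_new: "e \<notin> set kl \<Longrightarrow> once (kl @ [e]) = insert e (once kl) \<and> twice (kl @ [e]) = twice kl"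
proof -
  assume e: "e \<notin> set kl"
  then have "cnt kl e = 0" unfolding cnt_def by (auto simp: filter_empty_conv)
  then show ?thesis using e unfolding once_def twice_def by (auto simp: cnt_snoc)
qed

lemma snoc_once: "e \<in> once kl \<Longrightarrow> once (kl @ [e]) = once kl - {e} \<and> twice (kl @ [e]) = insert e (twice kl)"
  unfolding once_def twice_def by (auto simp: cnt_snoc)

lemma snoc_twice: "e \<in> twice kl \<Longrightarrow> once (kl @ [e]) = once kl \<and> twice (kl @ [e]) = twice kl"
  unfolding once_def twice_def by (auto simp: cnt_snoc)

fun Gc :: "nat \<Rightarrow> nat \<Rightarrow> nat \<Rightarrow> nat \<Rightarrow> nat \<Rightarrow> nat" where
  "Gc n l 0 a b = (if a = 0 \<and> b = l then 1 else 0)"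
| "Gc n l (Suc m) a b = n * Gc n l m (Suc a) b + a * Gc n l m (a - 1) (Suc b) + b * Gc n l m a b"

lemma Gc_zero: "l < a + b \<Longrightarrow> Gc n l m a b = 0"
  by (induction m arbitrary: a b) auto

lemma finite_S: "finite V \<Longrightarrow> finite {zs. length zs = m \<and> set zs \<subseteq> V \<and> P zs}"
  by (rule finite_subset[OF _ finite_lists_length_eq[of V m]]) auto

lemma sum_if_const: "finite V \<Longrightarrow> (\<Sum>x\<in>V. if P x then (c::nat) else 0) = card {x\<in>V. P x} * c"
  by (simp add: sum.inter_filter[symmetric])

lemma abstract_count:
  fixes V :: "'a set" and \<kappa> :: "'a list \<Rightarrow> 'a \<Rightarrow> 'k"
  assumes fin: "finite V" and cV: "card V \<le> n" and inj: "\<And>ys. inj_on (\<kappa> ys) V"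
  shows "card {zs. length zs = m \<and> set zs \<subseteq> V \<and> good l (keys \<kappa> (ys @ zs))}
     \<le> Gc n l m (card (once (keys \<kappa> ys))) (card (twice (keys \<kappa> ys)))"
proof (induction m arbitrary: ys)
  case 0
  have "{zs. length zs = 0 \<and> set zs \<subseteq> V \<and> good l (keys \<kappa> (ys @ zs))}
     = (if good l (keys \<kappa> ys) then {[]} else {})" by auto
  then show ?case using good_iff[of l "keys \<kappa> ys"] by simp
next
  case (Suc m)
  define kl where "kl = keys \<kappa> ys"
  define a where "a = card (once kl)"
  define b where "b = card (twice kl)"
  define S where "S = (\<lambda>ys m. {zs. length zs = m \<and> set zs \<subseteq> V \<and> good l (keys \<kappa> (ys @ zs))})"
  define g where "g = (\<lambda>x. if \<kappa> ys x \<notin> set kl then Gc n l m (Suc a) b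
      else if \<kappa> ys x \<in> once kl then Gc n l m (a - 1) (Suc b) else Gc n l m a b)"
  have fo: "finite (once kl)" "finite (twice kl)" using set_split(1)[of kl]
    by (metis finite_Un finite_set)+
  have eqS: "S ys (Suc m) = (\<Union>x\<in>V. (#) x ` S (ys @ [x]) m)"
  proof
    show "S ys (Suc m) \<subseteq> (\<Union>x\<in>V. (#) x ` S (ys @ [x]) m)"
    proof
      fix zs assume "zs \<in> S ys (Suc m)"
      then obtain x zs' where "zs = x # zs'" "x \<in> V" "zs' \<in> S (ys @ [x]) m"
        unfolding S_def by (cases zs) auto
      then show "zs \<in> (\<Union>x\<in>V. (#) x ` S (ys @ [x]) m)" by auto
    qed
  next
    show "(\<Union>x\<in>V. (#) x ` S (ys @ [x]) m) \<subseteq> S ys (Suc m)"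
      unfolding S_def by auto
  qed
  have "card (S ys (Suc m)) \<le> (\<Sum>x\<in>V. card ((#) x ` S (ys @ [x]) m))"
    unfolding eqS by (rule card_UN_le[OF fin])
  also have "\<dots> \<le> (\<Sum>x\<in>V. card (S (ys @ [x]) m))"
    by (rule sum_mono) (rule card_image_le, simp add: S_def finite_S[OF fin])
  also have "\<dots> \<le> (\<Sum>x\<in>V. g x)"
  proof (rule sum_mono)
    fix x assume "x \<in> V"
    have IH: "card (S (ys @ [x]) m) \<le> Gc n l m (card (once (kl @ [\<kappa> ys x]))) (card (twice (kl @ [\<kappa> ys x])))"
      using Suc.IH[of "ys @ [x]"] unfolding S_def kl_def keys_snoc by simp
    show "card (S (ys @ [x]) m) \<le> g x"
    proof (cases "\<kappa> ys x \<in> set kl")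
      case False
      have "\<kappa> ys x \<notin> once kl" using False set_split(1)[of kl] by blast
      then show ?thesis using IH snoc_new[OF False] fo False unfolding g_def a_def b_def
        by (simp add: card_insert_if)
    next
      case True
      show ?thesis
      proof (cases "\<kappa> ys x \<in> once kl")
        case o: True
        have "\<kappa> ys x \<notin> twice kl" using o set_split(2)[of kl] by blast
        then show ?thesis using IH snoc_once[OF o] fo o True unfolding g_def a_def b_def
          by (simp add: card_insert_if)
      next
        case o: False
        then have tw: "\<kappa> ys x \<in> twice kl" using True set_split(1)[of kl] by blast
        then show ?thesis using IH snoc_twice[OF tw] fo o True unfolding g_def a_def b_def
          by simp
      qed
    qed
  qed
  also have "\<dots> \<le> n * Gc n l m (Suc a) b + a * Gc n l m (a - 1) (Suc b) + b * Gc n l m a b"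
  proof -
    define A1 where "A1 = {x\<in>V. \<kappa> ys x \<notin> set kl}"
    define A2 where "A2 = {x\<in>V. \<kappa> ys x \<in> once kl}"
    define A3 where "A3 = {x\<in>V. \<kappa> ys x \<in> twice kl}"
    have "(\<Sum>x\<in>V. g x) = (\<Sum>x\<in>V. (if x \<in> A1 then Gc n l m (Suc a) b else 0)
       + (if x \<in> A2 then Gc n l m (a - 1) (Suc b) else 0) + (if x \<in> A3 then Gc n l m a b else 0))"
      apply (rule sum.cong[OF refl])
      using set_split[of kl] unfolding g_def A1_def A2_def A3_def by auto
    also have "\<dots> = card A1 * Gc n l m (Suc a) b + card A2 * Gc n l m (a - 1) (Suc b) + card A3 * Gc n l m a b"
    proof -
      have e: "{x\<in>V. x \<in> A1} = A1" "{x\<in>V. x \<in> A2} = A2" "{x\<in>V. x \<in> A3} = A3"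
        unfolding A1_def A2_def A3_def by auto
      show ?thesis unfolding sum.distrib sum_if_const[OF fin] e ..
    qed
    also have "\<dots> \<le> n * Gc n l m (Suc a) b + a * Gc n l m (a - 1) (Suc b) + b * Gc n l m a b"
    proof -
      have "A1 \<subseteq> V" unfolding A1_def by blast
      then have "card A1 \<le> n" using cV card_mono[OF fin] le_trans by blast
      moreover have "card A2 \<le> a" unfolding a_def A2_def
        by (rule card_inj_on_le[OF inj_on_subset[OF inj] _ fo(1)]) auto
      moreover have "card A3 \<le> b" unfolding b_def A3_def
        by (rule card_inj_on_le[OF inj_on_subset[OF inj] _ fo(2)]) auto
      ultimately show ?thesis by (intro add_mono mult_le_mono1)
    qed
    finally show ?thesis .
  qed
  finally show ?case unfolding S_def a_def b_def kl_def by simp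
qed


definition E :: "nat \<Rightarrow> nat \<Rightarrow> real" where
  "E n c = real n ^ c / (2 ^ c * fact c)"

definition Bd :: "nat \<Rightarrow> nat \<Rightarrow> nat \<Rightarrow> nat \<Rightarrow> nat \<Rightarrow> real" where
  "Bd n l m a c = real (m choose (a + 2 * c)) * fact (a + 2 * c) * real l ^ (m - (a + 2 * c)) * E n c"

lemma E_Suc: "real n * E n c = 2 * real (Suc c) * E n (Suc c)"
proof -
  define D :: real where "D = 2 ^ c * fact c"
  define K :: real where "K = 2 * real (Suc c)"
  have p: "D \<noteq> 0" "K \<noteq> 0" unfolding D_def K_def by simp_all
  have "E n (Suc c) = real n * real n ^ c / (K * D)"
    unfolding E_def D_def K_def by (simp add: algebra_simps)
  moreover have "E n c = real n ^ c / D" unfolding E_def D_def by simp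
  ultimately have "D * (K * E n (Suc c)) = D * (real n * E n c)" using p by (simp add: field_simps)
  then show ?thesis using p unfolding K_def[symmetric] by simp
qed

lemma Bd_nonneg: "Bd n l m a c \<ge> 0"
  unfolding Bd_def E_def by simp

lemma Bd_rec:
  "(if c > 0 then real n * Bd n l m (Suc a) (c - 1) else 0) + real a * Bd n l m (a - 1) c
     + real l * Bd n l m a c = Bd n l (Suc m) a c"
proof (cases "a + 2 * c")
  case 0
  then show ?thesis unfolding Bd_def by simp
next
  case (Suc q)
  have T1: "(if c > 0 then real n * Bd n l m (Suc a) (c - 1) else 0)
      = 2 * real c * real (m choose q) * fact q * real l ^ (m - q) * E n c"
  proof (cases c)
    case 0 then show ?thesis by simp
  next
    case (Suc c')
    have "Suc a + 2 * (c - 1) = q" using Suc \<open>a + 2 * c = Suc q\<close> by simp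
    then have "real n * Bd n l m (Suc a) (c - 1) = real (m choose q) * fact q * real l ^ (m - q) * (real n * E n c')"
      unfolding Bd_def using Suc by (simp add: algebra_simps)
    also have "\<dots> = 2 * real c * real (m choose q) * fact q * real l ^ (m - q) * E n c"
      unfolding E_Suc using Suc by (simp add: algebra_simps)
    finally show ?thesis using Suc by simp
  qed
  have T2: "real a * Bd n l m (a - 1) c = real a * real (m choose q) * fact q * real l ^ (m - q) * E n c"
  proof (cases a)
    case 0 then show ?thesis by simp
  next
    case (Suc a')
    have "a - 1 + 2 * c = q" using Suc \<open>a + 2 * c = Suc q\<close> by simp
    then show ?thesis unfolding Bd_def by simp
  qed
  have T3: "real l * Bd n l m a c = real (m choose Suc q) * fact (Suc q) * real l ^ (m - q) * E n c"
  proof (cases "Suc q \<le> m")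
    case True
    then have "m - q = Suc (m - Suc q)" by simp
    then show ?thesis unfolding Bd_def using \<open>a + 2 * c = Suc q\<close> by (simp add: algebra_simps)
  next
    case False
    then show ?thesis unfolding Bd_def using \<open>a + 2 * c = Suc q\<close> by simp
  qed
  have "Bd n l (Suc m) a c = real (Suc m choose Suc q) * fact (Suc q) * real l ^ (m - q) * E n c"
    unfolding Bd_def using \<open>a + 2 * c = Suc q\<close> by simp
  also have "\<dots> = (real (m choose q) + real (m choose Suc q)) * (real (Suc q) * fact q) * real l ^ (m - q) * E n c"
    by simp
  also have "\<dots> = (2 * real c + real a) * real (m choose q) * fact q * real l ^ (m - q) * E n c
      + real (m choose Suc q) * fact (Suc q) * real l ^ (m - q) * E n c"
  proof -
    have h: "2 * real c + real a = real (Suc q)" using \<open>a + 2 * c = Suc q\<close>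
      by (metis add.commute of_nat_add of_nat_mult of_nat_numeral)
    show ?thesis unfolding h by (simp add: algebra_simps)
  qed
  finally show ?thesis using T1 T2 T3 by (simp add: algebra_simps)
qed

lemma Gc_le_Bd: "a + b \<le> l \<Longrightarrow> real (Gc n l m a b) \<le> Bd n l m a (l - a - b)"
proof (induction m arbitrary: a b)
  case 0
  show ?case
  proof (cases "a = 0 \<and> b = l")
    case True then show ?thesis unfolding Bd_def E_def by simp
  next
    case False then show ?thesis using Bd_nonneg by auto
  qed
next
  case (Suc m)
  define c where "c = l - a - b"
  have t1: "real n * real (Gc n l m (Suc a) b) \<le> (if c > 0 then real n * Bd n l m (Suc a) (c - 1) else 0)"
  proof (cases "c > 0")
    case True
    then have "Suc a + b \<le> l" "l - Suc a - b = c - 1" using Suc.prems unfolding c_def by auto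
    then show ?thesis using Suc.IH[of "Suc a" b] True by (simp add: mult_left_mono)
  next
    case False
    then have "l < Suc a + b" unfolding c_def using Suc.prems by auto
    then show ?thesis using Gc_zero False by simp
  qed
  have t2: "real a * real (Gc n l m (a - 1) (Suc b)) \<le> real a * Bd n l m (a - 1) c"
  proof (cases a)
    case 0 then show ?thesis by simp
  next
    case (Suc a')
    then have "a - 1 + Suc b \<le> l" "l - (a - 1) - Suc b = c" using Suc.prems unfolding c_def by auto
    then show ?thesis using Suc.IH[of "a - 1" "Suc b"] by (simp add: mult_left_mono)
  qed
  have t3: "real b * real (Gc n l m a b) \<le> real l * Bd n l m a c"
  proof -
    have "real (Gc n l m a b) \<le> Bd n l m a c" using Suc.IH[of a b] Suc.prems unfolding c_def by simp
    moreover have "real b \<le> real l" using Suc.prems by simp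
    ultimately show ?thesis by (simp add: mult_mono)
  qed
  have "real (Gc n l (Suc m) a b) = real n * real (Gc n l m (Suc a) b) + real a * real (Gc n l m (a - 1) (Suc b))
     + real b * real (Gc n l m a b)" by simp
  also have "\<dots> \<le> Bd n l (Suc m) a c"
    using t1 t2 t3 Bd_rec[of c n l m a] by linarith
  finally show ?case unfolding c_def .
qed

lemma fact_double: "fact (2 * l) = (2 ^ l * fact l * odd_dfact l :: nat)"
proof (induction l)
  case 0 then show ?case by (simp add: odd_dfact_def)
next
  case (Suc l)
  have o: "odd_dfact (Suc l) = (2 * l + 1) * odd_dfact l"
    unfolding odd_dfact_def by (simp add: prod.nat_ivl_Suc')
  have "fact (2 * Suc l) = (2 * l + 2) * ((2 * l + 1) * (fact (2 * l) :: nat))"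
    by (simp add: algebra_simps)
  then show ?case using Suc o by (simp add: algebra_simps)
qed

lemma Bd_final: "Bd n l N 0 l = real ((N choose (2 * l)) * odd_dfact l * l ^ (N - 2 * l) * n ^ l)"
proof -
  have "(fact (2 * l) :: real) = 2 ^ l * fact l * real (odd_dfact l)"
    using arg_cong[OF fact_double[of l], of real] by (simp add: of_nat_fact)
  then show ?thesis unfolding Bd_def E_def by simp
qed


definition kap :: "nat \<Rightarrow> nat \<Rightarrow> nat list \<Rightarrow> nat \<Rightarrow> nat set" where
  "kap k u ys x = {if length ys mod k = 0 then u else last ys, x}"

definition flat :: "nat \<Rightarrow> nat \<Rightarrow> nat list list \<Rightarrow> nat list" where
  "flat k t ws = map (\<lambda>s. ws ! (s div k) ! (s mod k + 1)) [0..<2 * t * k]"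

lemma kap_inj: "inj_on (kap k u ys) V"
  unfolding kap_def inj_on_def by (auto simp: doubleton_eq_iff)

lemma idx1: "(k::nat) > 0 \<Longrightarrow> j < k \<Longrightarrow> i < T \<Longrightarrow> i * k + j < T * k"
proof -
  assume "k > 0" "j < k" "i < T"
  then have "i * k + j < (i + 1) * k" by simp
  also have "\<dots> \<le> T * k" using \<open>i < T\<close> by (intro mult_le_mono1) simp
  finally show ?thesis .
qed

lemma idx2: "(k::nat) > 0 \<Longrightarrow> j < k \<Longrightarrow> (i * k + j) div k = i \<and> (i * k + j) mod k = j"
  by simp

lemma idx3: "(k::nat) > 0 \<Longrightarrow> s < T * k \<Longrightarrow> s div k < T"
  by (simp add: less_mult_imp_div_less)

lemma idx4: "(k::nat) > 0 \<Longrightarrow> s mod k \<noteq> 0 \<Longrightarrow> (s - 1) div k = s div k \<and> (s - 1) mod k + 1 = s mod k"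
proof -
  assume k: "k > 0" and r: "s mod k \<noteq> 0"
  have "s = s div k * k + s mod k" by simp
  then have "s - 1 = s div k * k + (s mod k - 1)" using r by linarith
  moreover have "s mod k < k" using k by simp
  then have "s mod k - 1 < k" by linarith
  ultimately show ?thesis using idx2[OF k, of "s mod k - 1" "s div k"] r by auto
qed

lemma last_take: "0 < s \<Longrightarrow> s \<le> length xs \<Longrightarrow> last (take s xs) = xs ! (s - 1)"
proof -
  assume a: "0 < s" "s \<le> length xs"
  then have "take s xs \<noteq> []" by auto
  then have "last (take s xs) = take s xs ! (length (take s xs) - 1)" by (rule last_conv_nth)
  also have "\<dots> = xs ! (s - 1)" using a by simp
  finally show ?thesis .
qed

context
  fixes n k t u :: nat
  assumes k: "k > 0"
begin

lemma keys_flat: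
  assumes ws: "length ws = 2 * t" "\<forall>w\<in>set ws. w \<in> walks n k u"
  shows "keys (kap k u) (flat k t ws) = map (\<lambda>s. step_edge (ws ! (s div k)) (s mod k)) [0..<2 * t * k]"
proof (rule nth_equalityI)
  show "length (keys (kap k u) (flat k t ws)) = length (map (\<lambda>s. step_edge (ws ! (s div k)) (s mod k)) [0..<2 * t * k])"
    unfolding keys_def flat_def by simp
next
  fix s assume "s < length (keys (kap k u) (flat k t ws))"
  then have s: "s < 2 * t * k" unfolding keys_def flat_def by simp
  define xs where "xs = flat k t ws"
  have i: "s div k < length ws" using idx3[OF k s] ws(1) by simp
  then have w: "ws ! (s div k) \<in> walks n k u" using ws(2) nth_mem by blast
  have prev: "(if length (take s xs) mod k = 0 then u else last (take s xs)) = ws ! (s div k) ! (s mod k)"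
  proof (cases "s mod k = 0")
    case True
    then show ?thesis using w s unfolding walks_def xs_def flat_def by simp
  next
    case False
    then have "s > 0" by (metis mod_0 neq0_conv)
    moreover have "s \<le> length xs" using s unfolding xs_def flat_def by simp
    ultimately have "last (take s xs) = xs ! (s - 1)" by (rule last_take)
    also have "\<dots> = ws ! ((s - 1) div k) ! ((s - 1) mod k + 1)"
    proof -
      have "s - 1 < 2 * t * k" using s by linarith
      then show ?thesis unfolding xs_def flat_def by simp
    qed
    also have "\<dots> = ws ! (s div k) ! (s mod k)" using idx4[OF k False] by simp
    finally show ?thesis using False s by (simp add: xs_def flat_def)
  qed
  show "keys (kap k u) (flat k t ws) ! s = map (\<lambda>s. step_edge (ws ! (s div k)) (s mod k)) [0..<2 * t * k] ! s"
  proof -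
    have "keys (kap k u) xs ! s = kap k u (take s xs) (xs ! s)" using s by (simp add: keys_def xs_def flat_def)
    also have "\<dots> = {ws ! (s div k) ! (s mod k), xs ! s}" unfolding kap_def prev ..
    also have "\<dots> = step_edge (ws ! (s div k)) (s mod k)" using s unfolding step_edge_def xs_def flat_def by simp
    finally show ?thesis using s unfolding xs_def by simp
  qed
qed

lemma pairs_image: "{(i, j). i < 2 * t \<and> j < k \<and> P i j} = (\<lambda>s. (s div k, s mod k)) ` {s. s < 2 * t * k \<and> P (s div k) (s mod k)}"
proof
  show "{(i, j). i < 2 * t \<and> j < k \<and> P i j} \<subseteq> (\<lambda>s. (s div k, s mod k)) ` {s. s < 2 * t * k \<and> P (s div k) (s mod k)}"
  proof
    fix x assume "x \<in> {(i, j). i < 2 * t \<and> j < k \<and> P i j}"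
    then obtain i j where x: "x = (i, j)" "i < 2 * t" "j < k" "P i j" by blast
    then have "i * k + j < 2 * t * k" "(i * k + j) div k = i" "(i * k + j) mod k = j"
      using idx1[OF k] idx2[OF k] by auto
    then show "x \<in> (\<lambda>s. (s div k, s mod k)) ` {s. s < 2 * t * k \<and> P (s div k) (s mod k)}"
      using x by (intro image_eqI[of _ _ "i * k + j"]) auto
  qed
next
  show "(\<lambda>s. (s div k, s mod k)) ` {s. s < 2 * t * k \<and> P (s div k) (s mod k)} \<subseteq> {(i, j). i < 2 * t \<and> j < k \<and> P i j}"
    using idx3[OF k] k by auto
qed

lemma inj_divmod: "inj_on (\<lambda>s. (s div k, s mod k)) A"
  unfolding inj_on_def by (metis div_mult_mod_eq prod.inject)

lemma set_keys_flat:
  assumes ws: "length ws = 2 * t" "\<forall>w\<in>set ws. w \<in> walks n k u"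
  shows "set (keys (kap k u) (flat k t ws)) = tuple_edges k ws"
proof -
  have "set (keys (kap k u) (flat k t ws)) = (\<lambda>s. step_edge (ws ! (s div k)) (s mod k)) ` {s. s < 2 * t * k}"
    unfolding keys_flat[OF ws] by auto
  also have "\<dots> = (\<lambda>(i, j). step_edge (ws ! i) j) ` ((\<lambda>s. (s div k, s mod k)) ` {s. s < 2 * t * k \<and> True})"
    by (simp add: image_image)
  also have "\<dots> = (\<lambda>(i, j). step_edge (ws ! i) j) ` {(i, j). i < 2 * t \<and> j < k \<and> True}"
    unfolding pairs_image ..
  also have "\<dots> = tuple_edges k ws"
    unfolding tuple_edges_def using ws(1) by auto
  finally show ?thesis .
qed

lemma cnt_keys_flat:
  assumes ws: "length ws = 2 * t" "\<forall>w\<in>set ws. w \<in> walks n k u"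
  shows "cnt (keys (kap k u) (flat k t ws)) e = edge_mult k ws e"
proof -
  have "cnt (keys (kap k u) (flat k t ws)) e = card {s. s < 2 * t * k \<and> step_edge (ws ! (s div k)) (s mod k) = e}"
    unfolding cnt_def keys_flat[OF ws] length_filter_conv_card by (auto intro: arg_cong[where f=card])
  also have "\<dots> = card ((\<lambda>s. (s div k, s mod k)) ` {s. s < 2 * t * k \<and> step_edge (ws ! (s div k)) (s mod k) = e})"
    by (rule card_image[OF inj_divmod, symmetric])
  also have "\<dots> = edge_mult k ws e"
    unfolding edge_mult_def pairs_image[of "\<lambda>i j. step_edge (ws ! i) j = e", symmetric] using ws(1) by simp
  finally show ?thesis .
qed

lemma flat_inj: "inj_on (flat k t) {ws. length ws = 2 * t \<and> (\<forall>w\<in>set ws. w \<in> walks n k u)}"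
proof (rule inj_onI)
  fix ws ws' assume a: "ws \<in> {ws. length ws = 2 * t \<and> (\<forall>w\<in>set ws. w \<in> walks n k u)}"
    and b: "ws' \<in> {ws. length ws = 2 * t \<and> (\<forall>w\<in>set ws. w \<in> walks n k u)}"
    and e: "flat k t ws = flat k t ws'"
  show "ws = ws'"
  proof (rule nth_equalityI)
    show "length ws = length ws'" using a b by simp
  next
    fix i assume i: "i < length ws"
    have wi: "ws ! i \<in> walks n k u" "ws' ! i \<in> walks n k u" using a b i by auto
    show "ws ! i = ws' ! i"
    proof (rule nth_equalityI)
      show "length (ws ! i) = length (ws' ! i)" using wi unfolding walks_def by simp
    next
      fix j assume j: "j < length (ws ! i)"
      show "ws ! i ! j = ws' ! i ! j"
      proof (cases j)
        case 0 then show ?thesis using wi unfolding walks_def by simp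
      next
        case (Suc j')
        then have j': "j' < k" using j wi unfolding walks_def by simp
        have s: "i * k + j' < 2 * t * k" "(i * k + j') div k = i" "(i * k + j') mod k = j'"
          using idx1[OF k j', of i "2 * t"] idx2[OF k j'] i a by auto
        have "flat k t ws ! (i * k + j') = flat k t ws' ! (i * k + j')" using e by simp
        then show ?thesis using s Suc unfolding flat_def by simp
      qed
    qed
  qed
qed

end


theorem proposition10:
  fixes n k t u l :: nat and p :: real
  assumes "n > 0" "k > 0" "t > 0"
    and "real t \<le> ln (real n) / (2 * real k)"
    and "p \<ge> (ln (real n)) ^ 3 / real n"
    and "u \<in> {1..n}"
  shows "card {ws \<in> paired_tuples n k t u. card (tuple_edges k ws) = l}
           \<le> ((2 * t * k) choose (2 * l)) * odd_dfact l * l ^ (2 * k * t - 2 * l) * n ^ l"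
proof -
  have k: "k > 0" by fact
  define T where "T = {ws \<in> paired_tuples n k t u. card (tuple_edges k ws) = l}"
  define S where "S = {zs. length zs = 2 * t * k \<and> set zs \<subseteq> {1..n} \<and> good l (keys (kap k u) ([] @ zs))}"
  have TW: "T \<subseteq> {ws. length ws = 2 * t \<and> (\<forall>w\<in>set ws. w \<in> walks n k u)}"
    unfolding T_def paired_tuples_def by auto
  have img: "flat k t ` T \<subseteq> S"
  proof
    fix xs assume "xs \<in> flat k t ` T"
    then obtain ws where ws: "ws \<in> T" "xs = flat k t ws" by blast
    have w: "length ws = 2 * t" "\<forall>w\<in>set ws. w \<in> walks n k u" using ws(1) TW by auto
    have "set xs \<subseteq> {1..n}"
    proof
      fix x assume "x \<in> set xs"
      then obtain s where s: "s < 2 * t * k" "x = ws ! (s div k) ! (s mod k + 1)"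
        unfolding ws(2) flat_def by auto
      have i: "s div k < length ws" using idx3[OF k s(1)] w(1) by simp
      then have wi: "ws ! (s div k) \<in> walks n k u" using w(2) nth_mem by blast
      have "s mod k + 1 < length (ws ! (s div k))" using wi k unfolding walks_def by simp
      then have "x \<in> set (ws ! (s div k))" using s(2) nth_mem by blast
      then show "x \<in> {1..n}" using wi unfolding walks_def by blast
    qed
    moreover have "good l (keys (kap k u) xs)"
      using ws(1) unfolding good_def ws(2) set_keys_flat[OF k w] cnt_keys_flat[OF k w]
        T_def paired_tuples_def by auto
    moreover have "length xs = 2 * t * k" unfolding ws(2) flat_def by simp
    ultimately show "xs \<in> S" unfolding S_def by simp
  qed
  have finS: "finite S" unfolding S_def by (rule finite_S) simp
  have "card T \<le> card S"
    by (rule card_inj_on_le[OF inj_on_subset[OF flat_inj[OF k] TW] img finS])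
  also have "card S \<le> Gc n l (2 * t * k) (card (once (keys (kap k u) []))) (card (twice (keys (kap k u) [])))"
    unfolding S_def by (rule abstract_count) (auto intro: kap_inj)
  also have "\<dots> = Gc n l (2 * t * k) 0 0"
    unfolding keys_def once_def twice_def by simp
  finally have "real (card T) \<le> real (Gc n l (2 * t * k) 0 0)" by simp
  also have "\<dots> \<le> Bd n l (2 * t * k) 0 (l - 0 - 0)" by (rule Gc_le_Bd) simp
  also have "\<dots> = real (((2 * t * k) choose (2 * l)) * odd_dfact l * l ^ (2 * t * k - 2 * l) * n ^ l)"
    using Bd_final by simp
  finally have "card T \<le> ((2 * t * k) choose (2 * l)) * odd_dfact l * l ^ (2 * t * k - 2 * l) * n ^ l"
    by linarith
  moreover have "2 * t * k = 2 * k * t" by simp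
  ultimately show ?thesis unfolding T_def by metis
qed

end
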